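(* Let $\mathcal{S}=(S,\boldsymbol{\tau})$ be a species tree on $X=\{x_1,\ldots,x_n\}$ with height $\eta=\tau_0+\cdots+\tau_{n-2}$, let $h$ be a gene tree history evolving within $\mathcal{S}$ (with given coalescent times), and let $0<\eta'\le\eta$. Let $h^{\mathit{top}}_{\mathit{ext}}$ be the extended top part of $h$ concerning cut height $\eta'$ and let $h^1,\ldots,h^k$ be the chopped parts of $h$ concerning cut height $\eta'$. Then for each $x_i\in X$, $$FP_h(x_i) = FP_{h^i}(x_i) + FP_{h^{\mathit{top}}_{\mathit{ext}}}(v_{x_i}),$$ where $h^i$ is the chopped part containing $x_i$ (whose root may have out-degree $1$) and $v_{x_i}$ is any one of the newly attached leaves of $h^{\mathit{top}}_{\mathit{ext}}$ whose parent is an ancestor of $x_i$ in $h$.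
   Context: A species tree $\mathcal{S}=(S,\boldsymbol{\tau})$ on $X$ is a rooted binary phylogenetic tree $S$ with leaf set $X$ and positive interval lengths $\tau_0,\dots,\tau_{n-2}$ between successive speciation events ($\tau_0$ from the leaves at time $0$ to the first speciation), so it is ultrametric with height $\eta=\tau_0+\cdots+\tau_{n-2}$. A gene tree history $h$ evolving within $\mathcal{S}$ is an ultrametric rooted binary tree with leaf set $X$ (leaves at time $0$) whose internal vertices are coalescent events placed at specific times within populations (branches) of $\mathcal{S}$ or above its root; its edge lengths are given by these times, and its root lies above height $\eta$. Cutting $h$ at height $\eta'$: every edge of $h$ present at time $\eta'$ is subdivided into two edges at that time, disconnecting $h$; if an internal vertex $v$ of $h$ lies exactly at time $\eta'$, it is split into two copies, one being the root of the subtree with the outgoing (descendant) edges and the other a new leaf on the incoming edge. This yields a forest; the tree containing the root of $h$ is the top part $h^{\mathit{top}}$, and the other trees $h^1,\dots,h^k$ are the chopped parts. The extended top part $h^{\mathit{top}}_{\mathit{ext}}$ is obtained from $h^{\mathit{top}}$ by attaching to each leaf $\ell$ of $h^{\mathit{top}}$, via edges of length $0$, as many new leaves as $\ell$ had descendant leaves in $h$ (the result may be non-binary and contain degree-2 vertices). For a rooted tree $T$ with root $\rho$ and nonnegative edge lengths $l(e)$, the Fair Proportion index is $FP_T(x)=\sum_{e\in P(T;\rho,x)} l(e)/n(e)$, where $P(T;\rho,x)$ is the path from $\rho$ to leaf $x$ and $n(e)$ is the number of leaves of $T$ descending from $e$. *)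

theory Defs
  imports Main "HOL.Real"
begin

text \<open>Ultrametric rooted trees given by vertex times: a leaf sits at time 0,
  an internal vertex carries its time (height) and the list of its children.
  Edge lengths are differences of times.\<close>
datatype 'a htree = HLeaf 'a | HNode real "'a htree list"

text \<open>Rooted trees with explicit nonnegative edge lengths (arbitrary out-degree).\<close>
datatype 'a wtree = Leaf 'a | Node "(real \<times> 'a wtree) list"

fun htime :: "'a htree \<Rightarrow> real" where
  "htime (HLeaf a) = 0"
| "htime (HNode t cs) = t"

fun hleaves :: "'a htree \<Rightarrow> 'a list" where
  "hleaves (HLeaf a) = [a]"
| "hleaves (HNode t cs) = concat (map hleaves cs)"

fun hsubtrees :: "'a htree \<Rightarrow> 'a htree set" where
  "hsubtrees (HLeaf a) = {HLeaf a}"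
| "hsubtrees (HNode t cs) = insert (HNode t cs) (\<Union>c\<in>set cs. hsubtrees c)"

definition hinternal :: "'a htree \<Rightarrow> bool" where
  "hinternal v \<longleftrightarrow> (\<exists>t cs. v = HNode t cs)"

fun ultrametric_binary :: "'a htree \<Rightarrow> bool" where
  "ultrametric_binary (HLeaf a) = True"
| "ultrametric_binary (HNode t cs) =
     (length cs = 2 \<and> (\<forall>c\<in>set cs. htime c < t \<and> ultrametric_binary c))"

text \<open>Species tree on X: rooted binary phylogenetic tree with leaf set X, ultrametric,
  speciation events at pairwise distinct times (so the successive interval lengths
  tau_0, ..., tau_(n-2) are positive); its height eta is the time of its root.\<close>
definition species_tree :: "'a set \<Rightarrow> 'a htree \<Rightarrow> bool" where
  "species_tree X S \<longleftrightarrow> ultrametric_binary S \<and> distinct (hleaves S) \<and> set (hleaves S) = X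
     \<and> inj_on htime {s \<in> hsubtrees S. hinternal s}"

text \<open>Gene tree history evolving within species tree S: ultrametric binary tree with
  leaf set X; every coalescent event v happens in a population of S, i.e. not earlier
  than the speciation event (MRCA in S) joining the species below v; its root lies
  above the root of S.\<close>
definition gene_tree_history :: "'a htree \<Rightarrow> 'a set \<Rightarrow> 'a htree \<Rightarrow> bool" where
  "gene_tree_history S X h \<longleftrightarrow> ultrametric_binary h \<and> distinct (hleaves h) \<and> set (hleaves h) = X
     \<and> (\<forall>v\<in>hsubtrees h. hinternal v \<longrightarrow>
          (\<exists>s\<in>hsubtrees S. set (hleaves v) \<subseteq> set (hleaves s) \<and> htime s \<le> htime v))
     \<and> htime S < htime h"

fun to_w :: "'a htree \<Rightarrow> 'a wtree" where
  "to_w (HLeaf a) = Leaf a"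
| "to_w (HNode t cs) = Node (map (\<lambda>c. (t - htime c, to_w c)) cs)"

fun wleaves :: "'a wtree \<Rightarrow> 'a list" where
  "wleaves (Leaf a) = [a]"
| "wleaves (Node cs) = concat (map (\<lambda>p. wleaves (snd p)) cs)"

fun FP :: "'a wtree \<Rightarrow> 'a \<Rightarrow> real" where
  "FP (Leaf a) x = 0"
| "FP (Node cs) x = sum_list (map (\<lambda>p. if x \<in> set (wleaves (snd p))
       then fst p / real (length (wleaves (snd p))) + FP (snd p) x else 0) cs)"

text \<open>Chopped parts when cutting at height e (applied to a tree whose root is above e).\<close>
fun chopped :: "real \<Rightarrow> 'a htree \<Rightarrow> 'a wtree list" where
  "chopped e (HLeaf a) = []"
| "chopped e (HNode t cs) = concat (map (\<lambda>c.
      if e < htime c then chopped e c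
      else if htime c = e then [to_w c]
      else [Node [(e - htime c, to_w c)]]) cs)"

text \<open>Extended top part when cutting at height e: every edge reaching time e ends in a
  new leaf at time e, to which new leaves are attached by edges of length 0, one for
  each leaf of h below it; these new leaves are labelled by those descendant leaves.\<close>
fun ext_top :: "real \<Rightarrow> 'a htree \<Rightarrow> 'a wtree" where
  "ext_top e (HLeaf a) = Leaf a"
| "ext_top e (HNode t cs) = Node (map (\<lambda>c.
      if e < htime c then (t - htime c, ext_top e c)
      else (t - e, Node (map (\<lambda>y. (0, Leaf y)) (hleaves c)))) cs)"

end

theory Submission
  imports Defs
begin

lemma wleaves_to_w[simp]: "wleaves (to_w T) = hleaves T"
  by (induction T) (auto simp: o_def intro!: arg_cong[where f=concat])

lemma wleaves_ext_top[simp]: "wleaves (ext_top e T) = hleaves T"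
proof (induction T)
  case (HNode t cs)
  have "map (\<lambda>c. wleaves (snd (if e < htime c then (t - htime c, ext_top e c)
      else (t - e, Node (map (\<lambda>y. (0::real, Leaf y)) (hleaves c)))))) cs = map hleaves cs"
    using HNode by (auto simp: o_def)
  then show ?case by (simp add: o_def del: map_eq_conv)
qed simp

lemma chopped_leaves: "p \<in> set (chopped e T) \<Longrightarrow> set (wleaves p) \<subseteq> set (hleaves T)"
proof (induction T arbitrary: p)
  case (HNode t cs)
  then show ?case by (fastforce split: if_splits)
qed simp

lemma chopped_exists: "0 < e \<Longrightarrow> e < htime T \<Longrightarrow> x \<in> set (hleaves T) \<Longrightarrow>
   \<exists>p\<in>set (chopped e T). x \<in> set (wleaves p)"
proof (induction T)
  case (HNode t cs)
  then obtain c where c: "c \<in> set cs" "x \<in> set (hleaves c)" by auto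
  show ?case
  proof (cases "e < htime c")
    case True
    then obtain p where "p\<in>set (chopped e c)" "x \<in> set (wleaves p)"
      using HNode c by auto
    then show ?thesis using c True by force
  next
    case False
    then show ?thesis using c by (cases "htime c = e") force+
  qed
qed simp

lemma sum_pick:
  "distinct (concat (map L cs)) \<Longrightarrow> c \<in> set cs \<Longrightarrow> x \<in> set (L c) \<Longrightarrow>
   sum_list (map (\<lambda>p. if x \<in> set (L p) then g p else 0) cs) = (g c :: real)"
proof (induction cs)
  case (Cons a cs)
  show ?case
  proof (cases "a = c")
    case True
    then have "\<forall>p\<in>set cs. x \<notin> set (L p)" using Cons.prems by auto
    then have "sum_list (map (\<lambda>p. if x \<in> set (L p) then g p else 0) cs) = 0"
      by (induction cs) auto
    then show ?thesis using True Cons.prems by simp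
  next
    case False
    then have "c \<in> set cs" using Cons.prems by auto
    then have "x \<notin> set (L a)" using Cons.prems by auto
    then show ?thesis using Cons False \<open>c \<in> set cs\<close> by simp
  qed
qed simp

lemma FP_star: "FP (Node (map (\<lambda>z. (0::real, Leaf z)) L)) y = 0"
  by (induction L) (auto simp: o_def)

lemma main:
  "distinct (hleaves T) \<Longrightarrow> 0 < e \<Longrightarrow> e < htime T \<Longrightarrow> p \<in> set (chopped e T) \<Longrightarrow>
   x \<in> set (wleaves p) \<Longrightarrow> y \<in> set (wleaves p) \<Longrightarrow>
   FP (to_w T) x = FP p x + FP (ext_top e T) y"
proof (induction T arbitrary: p)
  case (HLeaf a)
  then show ?case by simp
next
  case (HNode t cs)
  from HNode.prems(4) obtain c where c: "c \<in> set cs" and pc: "p \<in> set (if e < htime c then chopped e c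
      else if htime c = e then [to_w c]
      else [Node [(e - htime c, to_w c)]])" by auto
  have xc: "x \<in> set (hleaves c)" and yc: "y \<in> set (hleaves c)"
    using pc HNode.prems(5,6) chopped_leaves[of p e c] by (auto split: if_splits)
  have dist: "distinct (concat (map hleaves cs))" using HNode.prems(1) by simp
  have dc: "distinct (hleaves c)" using dist c
    by (metis distinct_concat_iff image_eqI list.set_map)
  have L: "FP (to_w (HNode t cs)) x = (t - htime c) / real (length (hleaves c)) + FP (to_w c) x"
  proof -
    have "FP (to_w (HNode t cs)) x = sum_list (map (\<lambda>c. if x \<in> set (hleaves c) then (t - htime c) / real (length (hleaves c)) + FP (to_w c) x else 0) cs)"
      by (simp add: o_def) (intro arg_cong[where f=sum_list] map_cong, auto)
    then show ?thesis using sum_pick[OF dist c xc, of "\<lambda>c. (t - htime c) / real (length (hleaves c)) + FP (to_w c) x"]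
      by simp
  qed
  define g where "g = (\<lambda>c. if e < htime c then (t - htime c) / real (length (hleaves c)) + FP (ext_top e c) y
     else (t - e) / real (length (hleaves c)) + FP (Node (map (\<lambda>z. (0::real, Leaf z)) (hleaves c))) y)"
  have R: "FP (ext_top e (HNode t cs)) y = g c"
  proof -
    have "FP (ext_top e (HNode t cs)) y = sum_list (map (\<lambda>p. if y \<in> set (hleaves p) then g p else 0) cs)"
      by (auto simp: o_def g_def intro!: arg_cong[where f=sum_list] map_cong)
    then show ?thesis using sum_pick[OF dist c yc, of g] by simp
  qed
  show ?case
  proof (cases "e < htime c")
    case True
    then have "p \<in> set (chopped e c)" using pc by simp
    then have "FP (to_w c) x = FP p x + FP (ext_top e c) y"
      using HNode.IH[OF c dc HNode.prems(2) True] HNode.prems(5,6) by blast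
    then show ?thesis using L R True by (simp add: g_def)
  next
    case False
    note F = False
    show ?thesis
    proof (cases "htime c = e")
      case True
      then show ?thesis using L R F pc FP_star by (simp add: g_def)
    next
      case False
      then have "p = Node [(e - htime c, to_w c)]" using pc F by simp
      then have "FP p x = (e - htime c) / real (length (hleaves c)) + FP (to_w c) x"
        using xc by simp
      then show ?thesis using L R F FP_star by (simp add: g_def diff_divide_distrib)
    qed
  qed
qed

theorem lemma1:
  fixes X :: "'a set" and S h :: "'a htree" and \<eta>' :: real and x :: 'a
  assumes "species_tree X S"
    and "gene_tree_history S X h"
    and "0 < \<eta>'" and "\<eta>' \<le> htime S"
    and "x \<in> X"
  shows "(\<exists>p\<in>set (chopped \<eta>' h). x \<in> set (wleaves p))
       \<and> (\<forall>p\<in>set (chopped \<eta>' h). x \<in> set (wleaves p) \<longrightarrow>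
            (\<forall>y\<in>set (wleaves p). FP (to_w h) x = FP p x + FP (ext_top \<eta>' h) y))"
proof -
  have g: "distinct (hleaves h)" "set (hleaves h) = X" "htime S < htime h"
    using assms(2) unfolding gene_tree_history_def by auto
  have lt: "\<eta>' < htime h" using g(3) assms(4) by simp
  show ?thesis
    using chopped_exists[OF assms(3) lt] main[OF g(1) assms(3) lt] g(2) assms(5) by blast
qed

end
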